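(* Let $M_\varphi$ be a hyperbolic once-punctured torus bundle with fibre $S$. Then the image of the restriction map $r\colon X(M_\varphi)\to X(S)$ equals $X_\varphi(S)$. Moreover, $X_\varphi(S)$ contains at most finitely many characters of reducible representations.
   Context: $\pi_1(M_\varphi)=\langle t,a,b\mid t^{-1}at=\varphi(a), t^{-1}bt=\varphi(b)\rangle$ with $a,b$ free generators of $\pi_1(S)$, $t$ a meridian, and $\varphi_*\in\mathrm{SL}(2,\mathbb{Z})$ the induced map on $H_1(S)$, satisfying $|\operatorname{tr}\varphi_*|>2$. $X(N)$ denotes the $\mathrm{SL}(2,\mathbb{C})$-character variety. $X(S)\cong\mathbb{C}^3$ via $(\operatorname{tr}\rho(a),\operatorname{tr}\rho(b),\operatorname{tr}\rho(ab))$; $X_\varphi(S)$ is the fixed set of the polynomial automorphism of $X(S)$ induced by $\varphi$ ($\chi\mapsto\chi\circ\varphi$). $r$ is restriction to $\pi_1(S)$. *)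

theory Defs
  imports "HOL-Analysis.Analysis"
begin

type_synonym cmat = "complex^2^2"

text \<open>Generators of the free group pi_1(S) = F(a,b).\<close>
datatype gS = Ga | Gb

text \<open>Generators of pi_1(M_phi): the meridian t and the fibre generators a, b.\<close>
datatype gM = Gt | Fib gS

text \<open>Words in a free group: a letter (g, False) is g, (g, True) is g inverse.\<close>
type_synonym 'g word = "('g \<times> bool) list"

fun push :: "'g \<times> bool \<Rightarrow> 'g word \<Rightarrow> 'g word" where
  "push x [] = [x]"
| "push x (y # ys) = (if fst x = fst y \<and> snd x \<noteq> snd y then ys else x # y # ys)"

definition freduce :: "'g word \<Rightarrow> 'g word" where
  "freduce w = foldr push w []"

definition winv :: "'g word \<Rightarrow> 'g word" where
  "winv w = rev (map (\<lambda>(g, e). (g, \<not> e)) w)"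

definition wsubst :: "('g \<Rightarrow> 'h word) \<Rightarrow> 'g word \<Rightarrow> 'h word" where
  "wsubst f w = concat (map (\<lambda>(g, e). if e then winv (f g) else f g) w)"

definition is_free_aut :: "('g \<Rightarrow> 'g word) \<Rightarrow> bool" where
  "is_free_aut f \<longleftrightarrow> (\<exists>h. \<forall>g. freduce (wsubst h (f g)) = [(g, False)]
                              \<and> freduce (wsubst f (h g)) = [(g, False)])"

definition esum :: "'g \<Rightarrow> 'g word \<Rightarrow> int" where
  "esum g w = (\<Sum>x\<leftarrow>w. if fst x = g then (if snd x then -1 else 1) else 0)"

text \<open>The induced map phi_* on H_1(S) = Z^2 (basis a, b), entries and trace/det.\<close>
definition hom_matrix :: "(gS \<Rightarrow> gS word) \<Rightarrow> gS \<Rightarrow> gS \<Rightarrow> int" where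
  "hom_matrix phi i j = esum i (phi j)"

definition hom_trace :: "(gS \<Rightarrow> gS word) \<Rightarrow> int" where
  "hom_trace phi = hom_matrix phi Ga Ga + hom_matrix phi Gb Gb"

definition hom_det :: "(gS \<Rightarrow> gS word) \<Rightarrow> int" where
  "hom_det phi = hom_matrix phi Ga Ga * hom_matrix phi Gb Gb - hom_matrix phi Ga Gb * hom_matrix phi Gb Ga"

definition SL2 :: "cmat set" where
  "SL2 = {A. det A = 1}"

definition eval_word :: "('g \<Rightarrow> cmat) \<Rightarrow> 'g word \<Rightarrow> cmat" where
  "eval_word \<rho> w = foldr (\<lambda>(g, e) M. (if e then matrix_inv (\<rho> g) else \<rho> g) ** M) w (mat 1)"

text \<open>Representations of pi_1(S) (free group: any assignment of generators into SL(2,C)).\<close>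
definition repS :: "(gS \<Rightarrow> cmat) \<Rightarrow> bool" where
  "repS \<sigma> \<longleftrightarrow> (\<forall>g. \<sigma> g \<in> SL2)"

text \<open>Representations of pi_1(M_phi) = < t,a,b | t^-1 a t = phi(a), t^-1 b t = phi(b) >.\<close>
definition repM :: "(gS \<Rightarrow> gS word) \<Rightarrow> (gM \<Rightarrow> cmat) \<Rightarrow> bool" where
  "repM phi \<rho> \<longleftrightarrow> (\<forall>g. \<rho> g \<in> SL2) \<and>
     (\<forall>g. matrix_inv (\<rho> Gt) ** \<rho> (Fib g) ** \<rho> Gt = eval_word (\<lambda>x. \<rho> (Fib x)) (phi g))"

definition character :: "('g \<Rightarrow> cmat) \<Rightarrow> 'g word \<Rightarrow> complex" where
  "character \<rho> w = trace (eval_word \<rho> w)"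

text \<open>Character varieties, as the sets of characters of SL(2,C)-representations.\<close>
definition XS :: "(gS word \<Rightarrow> complex) set" where
  "XS = {character \<sigma> | \<sigma>. repS \<sigma>}"

definition XM :: "(gS \<Rightarrow> gS word) \<Rightarrow> (gM word \<Rightarrow> complex) set" where
  "XM phi = {character \<rho> | \<rho>. repM phi \<rho>}"

definition restr :: "(gM word \<Rightarrow> complex) \<Rightarrow> gS word \<Rightarrow> complex" where
  "restr ch = (\<lambda>w. ch (map (\<lambda>(g, e). (Fib g, e)) w))"

definition phi_act :: "(gS \<Rightarrow> gS word) \<Rightarrow> (gS word \<Rightarrow> complex) \<Rightarrow> gS word \<Rightarrow> complex" where
  "phi_act phi ch = (\<lambda>w. ch (wsubst phi w))"

definition X_phi :: "(gS \<Rightarrow> gS word) \<Rightarrow> (gS word \<Rightarrow> complex) set" where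
  "X_phi phi = {ch \<in> XS. phi_act phi ch = ch}"

definition reducible :: "('g \<Rightarrow> cmat) \<Rightarrow> bool" where
  "reducible \<sigma> \<longleftrightarrow> (\<exists>v::complex^2. v \<noteq> 0 \<and> (\<forall>w. \<exists>c. eval_word \<sigma> w *v v = c *s v))"

end

theory Submission
  imports Defs
begin

definition mk :: "complex \<Rightarrow> complex \<Rightarrow> complex \<Rightarrow> complex \<Rightarrow> cmat" where
  "mk a b c d = (\<chi> i j. if i = 1 then (if j = 1 then a else b) else (if j = 1 then c else d))"

lemma mk_nth [simp]:
  "mk a b c d $ 1 $ 1 = a" "mk a b c d $ 1 $ 2 = b" "mk a b c d $ 2 $ 1 = c" "mk a b c d $ 2 $ 2 = d"
  by (simp_all add: mk_def)

lemma cmat_eq_iff: "(M::cmat) = N \<longleftrightarrow> M$1$1 = N$1$1 \<and> M$1$2 = N$1$2 \<and> M$2$1 = N$2$1 \<and> M$2$2 = N$2$2"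
  by (auto simp: vec_eq_iff forall_2)

lemma cvec_eq_iff: "(x::complex^2) = y \<longleftrightarrow> x$1 = y$1 \<and> x$2 = y$2"
  by (auto simp: vec_eq_iff forall_2)

lemma mm_nth [simp]:
  fixes M N :: cmat
  shows "(M ** N)$1$1 = M$1$1*N$1$1 + M$1$2*N$2$1"
    "(M ** N)$1$2 = M$1$1*N$1$2 + M$1$2*N$2$2"
    "(M ** N)$2$1 = M$2$1*N$1$1 + M$2$2*N$2$1"
    "(M ** N)$2$2 = M$2$1*N$1$2 + M$2$2*N$2$2"
  by (simp_all add: matrix_matrix_mult_def sum_2)

lemma mv_nth [simp]:
  fixes M :: cmat and u :: "complex^2"
  shows "(M *v u)$1 = M$1$1*u$1 + M$1$2*u$2" "(M *v u)$2 = M$2$1*u$1 + M$2$2*u$2"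
  by (simp_all add: matrix_vector_mult_def sum_2)

lemma mat1_nth [simp]:
  "(mat 1 :: cmat)$1$1 = 1" "(mat 1 :: cmat)$1$2 = 0" "(mat 1 :: cmat)$2$1 = 0" "(mat 1 :: cmat)$2$2 = 1"
  by (simp_all add: mat_def)

lemma smult_nth [simp]: "(c *s (u::complex^2))$1 = c * u$1" "(c *s (u::complex^2))$2 = c * u$2"
  by simp_all

lemma det_c: "det (M::cmat) = M$1$1 * M$2$2 - M$1$2 * M$2$1"
  by (rule det_2)

lemma trace_c: "trace (M::cmat) = M$1$1 + M$2$2"
  by (simp add: trace_def sum_2)

lemma minv_unique:
  fixes M B :: cmat
  assumes "M ** B = mat 1" "B ** M = mat 1"
  shows "matrix_inv M = B"
proof -
  have ex: "\<exists>A'. M ** A' = mat 1 \<and> A' ** M = mat 1" using assms by blast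
  have "M ** matrix_inv M = mat 1 \<and> matrix_inv M ** M = mat 1"
    unfolding matrix_inv_def by (rule someI_ex[OF ex])
  then show ?thesis using assms by (metis matrix_mul_assoc matrix_mul_lid matrix_mul_rid)
qed

lemma minv_SL2:
  fixes M :: cmat
  assumes "det M = 1"
  shows "matrix_inv M = mk (M$2$2) (-M$1$2) (-M$2$1) (M$1$1)"
  apply (rule minv_unique)
  using assms by (auto simp: cmat_eq_iff det_c algebra_simps)

lemma minv_nth:
  fixes M :: cmat
  assumes "det M = 1"
  shows "matrix_inv M $1$1 = M$2$2" "matrix_inv M $1$2 = - M$1$2"
     "matrix_inv M $2$1 = - M$2$1" "matrix_inv M $2$2 = M$1$1"
  by (simp_all add: minv_SL2[OF assms])

lemma det_minv: "det (M::cmat) = 1 \<Longrightarrow> det (matrix_inv M) = 1"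
  by (simp add: minv_SL2 det_c algebra_simps)

lemma minv_left: "det (M::cmat) = 1 \<Longrightarrow> matrix_inv M ** M = mat 1"
  by (simp add: minv_SL2 cmat_eq_iff det_c algebra_simps)

lemma minv_right: "det (M::cmat) = 1 \<Longrightarrow> M ** matrix_inv M = mat 1"
  by (simp add: minv_SL2 cmat_eq_iff det_c algebra_simps)

lemma minv_minv: "det (M::cmat) = 1 \<Longrightarrow> matrix_inv (matrix_inv M) = M"
  by (metis minv_unique minv_left minv_right)

lemma minv_mult: "det (M::cmat) = 1 \<Longrightarrow> det (N::cmat) = 1 \<Longrightarrow> matrix_inv (M ** N) = matrix_inv N ** matrix_inv M"
  apply (rule minv_unique)
   apply (metis matrix_mul_assoc minv_right matrix_mul_rid)
  apply (metis matrix_mul_assoc minv_left matrix_mul_rid)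
  done

lemma det_mult_c: "det ((M::cmat) ** N) = det M * det N"
  by (rule det_mul)

lemma eval_Nil [simp]: "eval_word \<sigma> [] = mat 1"
  by (simp add: eval_word_def)

lemma eval_Cons [simp]: "eval_word \<sigma> ((g, e) # w) = (if e then matrix_inv (\<sigma> g) else \<sigma> g) ** eval_word \<sigma> w"
  by (simp add: eval_word_def)

lemma eval_append: "eval_word \<sigma> (u @ w) = eval_word \<sigma> u ** eval_word \<sigma> w"
  by (induction u) (auto simp: matrix_mul_assoc)

definition SLa :: "('g \<Rightarrow> cmat) \<Rightarrow> bool" where
  "SLa \<sigma> \<longleftrightarrow> (\<forall>g. det (\<sigma> g) = 1)"

lemma det_eval: "SLa \<sigma> \<Longrightarrow> det (eval_word \<sigma> w) = 1"
  by (induction w) (auto simp: SLa_def det_mult_c det_minv det_I)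

lemma eval_winv: "SLa \<sigma> \<Longrightarrow> eval_word \<sigma> (winv w) = matrix_inv (eval_word \<sigma> w)"
proof (induction w)
  case Nil
  then show ?case by (simp add: winv_def minv_unique)
next
  case (Cons x w)
  obtain g e where x: "x = (g, e)" by force
  have "winv (x # w) = winv w @ [(g, \<not> e)]" by (simp add: winv_def x)
  then have "eval_word \<sigma> (winv (x # w)) = matrix_inv (eval_word \<sigma> w) ** (if e then \<sigma> g else matrix_inv (\<sigma> g))"
    using Cons by (simp add: eval_append)
  also have "\<dots> = matrix_inv (eval_word \<sigma> (x # w))"
    using Cons.prems by (simp add: x SLa_def minv_mult det_eval det_minv minv_minv)
  finally show ?case .
qed

lemma eval_wsubst: "SLa \<sigma> \<Longrightarrow> eval_word \<sigma> (wsubst f w) = eval_word (\<lambda>g. eval_word \<sigma> (f g)) w"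
proof (induction w)
  case Nil
  then show ?case by (simp add: wsubst_def)
next
  case (Cons x w)
  obtain g e where x: "x = (g, e)" by force
  have "wsubst f (x # w) = (if e then winv (f g) else f g) @ wsubst f w" by (simp add: wsubst_def x)
  then show ?case using Cons by (simp add: eval_append x eval_winv)
qed

lemma SLa_subst: "SLa \<sigma> \<Longrightarrow> SLa (\<lambda>g. eval_word \<sigma> (f g))"
  by (simp add: SLa_def det_eval)

lemma eval_push: "SLa \<sigma> \<Longrightarrow> eval_word \<sigma> (push x ys) = eval_word \<sigma> (x # ys)"
proof (cases ys)
  case Nil
  then show ?thesis by simp
next
  case (Cons y ys')
  assume sl: "SLa \<sigma>"
  obtain g e where x: "x = (g, e)" by force
  obtain h f where y: "y = (h, f)" by force
  show ?thesis
  proof (cases "g = h \<and> e \<noteq> f")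
    case True
    then show ?thesis using sl
      by (cases f) (auto simp: Cons x y matrix_mul_assoc SLa_def minv_left minv_right)
  next
    case False
    then show ?thesis by (simp add: Cons x y)
  qed
qed

lemma eval_freduce: "SLa \<sigma> \<Longrightarrow> eval_word \<sigma> (freduce w) = eval_word \<sigma> w"
proof (induction w)
  case Nil
  then show ?case by (simp add: freduce_def)
next
  case (Cons x w)
  obtain g e where x: "x = (g, e)" by force
  have "freduce (x # w) = push x (freduce w)" by (simp add: freduce_def)
  then show ?case using Cons by (simp add: eval_push x)
qed

lemma eval_conj:
  assumes "SLa \<sigma>" "det T = 1"
  shows "eval_word (\<lambda>g. matrix_inv T ** \<sigma> g ** T) w = matrix_inv T ** eval_word \<sigma> w ** T"
proof (induction w)
  case Nil
  then show ?case using assms by (simp add: minv_left)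
next
  case (Cons x w)
  obtain g e where x: "x = (g, e)" by force
  have d: "det (matrix_inv T ** \<sigma> g ** T) = 1" "det (matrix_inv T ** \<sigma> g) = 1"
    using assms by (simp_all add: det_mult_c det_minv SLa_def)
  have i: "matrix_inv (matrix_inv T ** \<sigma> g ** T) = matrix_inv T ** matrix_inv (\<sigma> g) ** T"
    using assms d by (simp add: minv_mult det_minv SLa_def minv_minv matrix_mul_assoc)
  have "T ** matrix_inv T = mat 1" using assms by (simp add: minv_right)
  then have c: "\<And>X Y. (matrix_inv T ** X ** T) ** (matrix_inv T ** Y ** T) = matrix_inv T ** (X ** Y) ** T"
    by (metis matrix_mul_assoc matrix_mul_lid)
  show ?case using Cons by (simp add: x i c)
qed

lemma trace_conj: "det (T::cmat) = 1 \<Longrightarrow> trace (matrix_inv T ** M ** T) = trace M"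
  by (metis matrix_mul_assoc trace_mul_sym minv_right matrix_mul_lid)


definition common_eig :: "cmat \<Rightarrow> cmat \<Rightarrow> bool" where
  "common_eig A B \<longleftrightarrow> (\<exists>v::complex^2. v \<noteq> 0 \<and> (\<exists>a. A *v v = a *s v) \<and> (\<exists>b. B *v v = b *s v))"

lemma cvec_nz: "(v::complex^2) \<noteq> 0 \<longleftrightarrow> v$1 \<noteq> 0 \<or> v$2 \<noteq> 0"
  by (auto simp: cvec_eq_iff)

definition mkv :: "complex \<Rightarrow> complex \<Rightarrow> complex^2" where
  "mkv a b = (\<chi> i. if i = 1 then a else b)"

lemma mkv_nth [simp]: "mkv a b $ 1 = a" "mkv a b $ 2 = b"
  by (simp_all add: mkv_def)

lemma eigvec:
  fixes B :: cmat
  assumes "(B$1$1 - m) * (B$2$2 - m) - B$1$2 * B$2$1 = 0"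
  shows "\<exists>v. v \<noteq> 0 \<and> B *v v = m *s v"
proof (cases "B$1$1 - m \<noteq> 0 \<or> B$1$2 \<noteq> 0")
  case True
  show ?thesis
    apply (rule exI[of _ "mkv (B$1$2) (m - B$1$1)"])
    using True assms by (auto simp: cvec_eq_iff algebra_simps)
next
  case False
  show ?thesis
  proof (cases "B$2$1 \<noteq> 0 \<or> B$2$2 - m \<noteq> 0")
    case True
    show ?thesis
      apply (rule exI[of _ "mkv (m - B$2$2) (B$2$1)"])
      using True False assms by (auto simp: cvec_eq_iff algebra_simps)
  next
    case False2: False
    show ?thesis
      apply (rule exI[of _ "mkv 1 0"])
      using False False2 by (auto simp: cvec_eq_iff algebra_simps)
  qed
qed

lemma notpar:
  fixes v w :: "complex^2"
  assumes "v \<noteq> 0" "\<not> (\<exists>a. w = a *s v)"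
  shows "v$1 * w$2 - v$2 * w$1 \<noteq> 0"
proof
  assume d: "v$1 * w$2 - v$2 * w$1 = 0"
  show False
  proof (cases "v$1 = 0")
    case False
    have "w = (w$1 / v$1) *s v" using False d by (auto simp: cvec_eq_iff field_simps)
    then show False using assms by blast
  next
    case True
    then have "v$2 \<noteq> 0" using assms(1) by (simp add: cvec_nz)
    have "w = (w$2 / v$2) *s v" using True \<open>v$2 \<noteq> 0\<close> d by (auto simp: cvec_eq_iff field_simps)
    then show False using assms by blast
  qed
qed

lemma eig_nz:
  fixes M :: cmat
  assumes "det M = 1" "v \<noteq> 0" "M *v v = c *s v"
  shows "c \<noteq> 0"
proof
  assume "c = 0"
  then have "M *v v = 0" using assms by simp
  have "v = (matrix_inv M ** M) *v v" using assms by (simp add: minv_left)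
  also have "\<dots> = matrix_inv M *v (M *v v)" by (simp add: matrix_vector_mul_assoc)
  also have "\<dots> = 0" using \<open>M *v v = 0\<close> by simp
  finally show False using assms by simp
qed

lemma trace_eig:
  fixes M :: cmat
  assumes "det M = 1" "v \<noteq> 0" "M *v v = c *s v"
  shows "trace M = c + 1 / c"
proof -
  have c: "c \<noteq> 0" using eig_nz assms by blast
  have e1: "M$1$1 * v$1 + M$1$2 * v$2 = c * v$1" and e2: "M$2$1 * v$1 + M$2$2 * v$2 = c * v$2"
    using assms(3) by (auto simp: cvec_eq_iff)
  have dt: "M$1$1 * M$2$2 - M$1$2 * M$2$1 = 1" using assms(1) by (simp add: det_c)
  define D where "D = (M$1$1 - c) * (M$2$2 - c) - M$1$2 * M$2$1"
  have "D * v$1 = 0" unfolding D_def using e1 e2 by algebra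
  moreover have "D * v$2 = 0" unfolding D_def using e1 e2 by algebra
  ultimately have "D = 0" using assms(2) by (auto simp: cvec_nz)
  then have "c * c - c * (M$1$1 + M$2$2) + 1 = 0" unfolding D_def using dt by algebra
  then show ?thesis using c by (simp add: trace_c field_simps)
qed

lemma scale_conj:
  fixes A B A' B' T :: cmat
  assumes "det T \<noteq> 0" "A ** T = T ** A'" "B ** T = T ** B'"
  shows "\<exists>T1. det T1 = 1 \<and> matrix_inv T1 ** A ** T1 = A' \<and> matrix_inv T1 ** B ** T1 = B'"
proof -
  define s where "s = csqrt (det T)"
  have s2: "s * s = det T" unfolding s_def by (metis power2_csqrt power2_eq_square)
  have s0: "s \<noteq> 0" using s2 assms(1) by auto
  define T1 where "T1 = mk (T$1$1 / s) (T$1$2 / s) (T$2$1 / s) (T$2$2 / s)"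
  have d1: "det T1 = 1" unfolding T1_def using s2 s0 by (simp add: det_c field_simps)
  have "\<And>X Y. X ** T = T ** Y \<Longrightarrow> matrix_inv T1 ** X ** T1 = Y"
  proof -
    fix X Y :: cmat
    assume h: "X ** T = T ** Y"
    have "X ** T1 = T1 ** Y" using h s0 unfolding T1_def
      by (simp add: cmat_eq_iff field_simps)
    then have "matrix_inv T1 ** X ** T1 = (matrix_inv T1 ** T1) ** Y" by (metis matrix_mul_assoc)
    then show "matrix_inv T1 ** X ** T1 = Y" using d1 by (simp add: minv_left)
  qed
  then show ?thesis using d1 assms by blast
qed


lemma trace_sim:
  fixes Q Qi C :: cmat
  assumes "Qi ** Q = mat 1"
  shows "trace (Q ** C ** Qi) = trace C"
  by (metis assms matrix_mul_assoc matrix_mul_rid trace_mul_sym)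

lemma canon:
  fixes A B :: cmat
  assumes dA: "det A = 1" and dB: "det B = 1" and mu: "m * m - trace B * m + 1 = 0"
    and ne: "\<not> common_eig A B"
  shows "\<exists>Q. det Q \<noteq> 0 \<and> A ** Q = Q ** mk 0 (-1) 1 (trace A)
           \<and> B ** Q = Q ** mk m (trace (A ** B) - trace A / m) 0 (1 / m)"
proof -
  have m0: "m \<noteq> 0" using mu by auto
  have "(B$1$1 - m) * (B$2$2 - m) - B$1$2 * B$2$1 = 0"
    using mu dB unfolding det_c trace_c by algebra
  then obtain v where v: "v \<noteq> 0" "B *v v = m *s v" using eigvec by blast
  define w where "w = A *v v"
  have np: "\<not> (\<exists>a. w = a *s v)"
  proof
    assume "\<exists>a. w = a *s v"
    then have "common_eig A B" unfolding common_eig_def w_def using v by blast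
    then show False using ne by simp
  qed
  define d where "d = v$1 * w$2 - v$2 * w$1"
  have d0: "d \<noteq> 0" unfolding d_def using notpar[OF v(1) np] .
  define Q where "Q = mk (v$1) (w$1) (v$2) (w$2)"
  define di where "di = 1 / d"
  have ddi: "d * di = 1" using d0 by (simp add: di_def)
  define Qi where "Qi = mk (w$2*di) (-w$1*di) (-v$2*di) (v$1*di)"
  have QQi: "Q ** Qi = mat 1" "Qi ** Q = mat 1"
    unfolding Q_def Qi_def using ddi d_def
    by (simp_all add: cmat_eq_iff; intro conjI; algebra)+
  have dQ: "det Q = d" unfolding Q_def d_def by (simp add: det_c)
  define u where "u = B *v w"
  define al where "al = (u$1 * w$2 - u$2 * w$1) * di"
  define be where "be = (v$1 * u$2 - v$2 * u$1) * di"
  define CA where "CA = mk 0 (-1) 1 (trace A)"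
  define CB where "CB = mk m al 0 be"
  have hA: "A ** Q = Q ** CA"
    unfolding CA_def Q_def w_def using dA
    apply (simp add: cmat_eq_iff det_c trace_c)
    apply (intro conjI)
       apply algebra+
    done
  have v1: "B$1$1 * v$1 + B$1$2 * v$2 = m * v$1" "B$2$1 * v$1 + B$2$2 * v$2 = m * v$2"
    using v(2) by (auto simp: cvec_eq_iff)
  have hB: "B ** Q = Q ** CB"
    unfolding CB_def Q_def al_def be_def u_def using v1 ddi d_def
    by (simp add: cmat_eq_iff; intro conjI; algebra)
  have Beq: "B = Q ** CB ** Qi"
    by (metis hB QQi(1) matrix_mul_assoc matrix_mul_rid)
  have ABeq: "A ** B = Q ** (CA ** CB) ** Qi"
    by (metis Beq hA matrix_mul_assoc)
  have "trace B = m + be" using trace_sim[OF QQi(2), of CB] Beq by (simp add: CB_def trace_c)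
  then have be: "be = 1 / m" using mu m0 by (simp add: field_simps)
  have "trace (A ** B) = al + trace A * be"
    using trace_sim[OF QQi(2), of "CA ** CB"] ABeq by (simp add: CA_def CB_def trace_c)
  then have al: "al = trace (A ** B) - trace A / m" using be by simp
  show ?thesis
    apply (rule exI[of _ Q])
    using d0 dQ hA hB al be by (simp add: CA_def CB_def)
qed

lemma conj_exists:
  fixes A B A' B' :: cmat
  assumes "det A = 1" "det B = 1" "det A' = 1" "det B' = 1"
    and "trace A = trace A'" "trace B = trace B'" "trace (A ** B) = trace (A' ** B')"
    and "\<not> common_eig A B" "\<not> common_eig A' B'"
  shows "\<exists>T. det T = 1 \<and> matrix_inv T ** A ** T = A' \<and> matrix_inv T ** B ** T = B'"
proof -
  define y where "y = trace B"
  define m where "m = (y + csqrt (y * y - 4)) / 2"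
  have mu: "m * m - y * m + 1 = 0"
  proof -
    have "csqrt (y * y - 4) * csqrt (y * y - 4) = y * y - 4"
      by (metis power2_csqrt power2_eq_square)
    then show ?thesis unfolding m_def by (simp add: field_simps) algebra
  qed
  obtain Q where Q: "det Q \<noteq> 0" "A ** Q = Q ** mk 0 (-1) 1 (trace A)"
      "B ** Q = Q ** mk m (trace (A ** B) - trace A / m) 0 (1 / m)"
    using canon[of A B m] assms mu y_def by auto
  obtain Q' where Q': "det Q' \<noteq> 0" "A' ** Q' = Q' ** mk 0 (-1) 1 (trace A)"
      "B' ** Q' = Q' ** mk m (trace (A ** B) - trace A / m) 0 (1 / m)"
    using canon[of A' B' m] assms mu y_def by auto
  define d where "d = det Q'"
  define di where "di = 1 / d"
  have ddi: "d * di = 1" using Q'(1) by (simp add: di_def d_def)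
  have dd: "d = Q'$1$1 * Q'$2$2 - Q'$1$2 * Q'$2$1" by (simp add: d_def det_c)
  define Qi where "Qi = mk (Q'$2$2*di) (-Q'$1$2*di) (-Q'$2$1*di) (Q'$1$1*di)"
  have QQi: "Q' ** Qi = mat 1" "Qi ** Q' = mat 1"
    unfolding Qi_def using ddi dd
    by (simp_all add: cmat_eq_iff; intro conjI; algebra)+
  define T where "T = Q ** Qi"
  have dT: "det T \<noteq> 0"
  proof
    assume "det T = 0"
    then have "det (T ** Q') = 0" by (simp add: det_mult_c)
    moreover have "T ** Q' = Q" unfolding T_def by (metis QQi(2) matrix_mul_assoc matrix_mul_rid)
    ultimately show False using Q(1) by simp
  qed
  have conj: "\<And>X X' C. X ** Q = Q ** C \<Longrightarrow> X' ** Q' = Q' ** C \<Longrightarrow> X ** T = T ** X'"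
  proof -
    fix X X' C :: cmat
    assume h1: "X ** Q = Q ** C" and h2: "X' ** Q' = Q' ** C"
    have "Qi ** X' = C ** Qi"
      by (metis QQi h2 matrix_mul_assoc matrix_mul_lid matrix_mul_rid)
    then show "X ** T = T ** X'" unfolding T_def by (metis h1 matrix_mul_assoc)
  qed
  have "A ** T = T ** A'" by (rule conj[OF Q(2) Q'(2)])
  moreover have "B ** T = T ** B'" by (rule conj[OF Q(3) Q'(3)])
  ultimately show ?thesis using scale_conj[OF dT] by blast
qed


fun cw :: "('g \<Rightarrow> complex) \<Rightarrow> 'g word \<Rightarrow> complex" where
  "cw \<kappa> [] = 1"
| "cw \<kappa> ((g, e) # w) = (if e then inverse (\<kappa> g) else \<kappa> g) * cw \<kappa> w"

lemma cw_append: "cw \<kappa> (u @ w) = cw \<kappa> u * cw \<kappa> w"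
  apply (induction u)
   apply simp
  subgoal for x u by (cases x) auto
  done

lemma cw_nz: "\<forall>g. \<kappa> g \<noteq> 0 \<Longrightarrow> cw \<kappa> w \<noteq> 0"
  apply (induction w)
   apply simp
  subgoal for x u by (cases x) auto
  done

lemma cw_winv: "\<forall>g. \<kappa> g \<noteq> 0 \<Longrightarrow> cw \<kappa> (winv w) = inverse (cw \<kappa> w)"
proof (induction w)
  case Nil
  then show ?case by (simp add: winv_def)
next
  case (Cons x w)
  obtain g e where x: "x = (g, e)" by force
  have "winv (x # w) = winv w @ [(g, \<not> e)]" by (simp add: winv_def x)
  then show ?case using Cons by (auto simp: cw_append x field_simps)
qed

lemma cw_wsubst: "\<forall>g. \<kappa> g \<noteq> 0 \<Longrightarrow> cw \<kappa> (wsubst f w) = cw (\<lambda>g. cw \<kappa> (f g)) w"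
proof (induction w)
  case Nil
  then show ?case by (simp add: wsubst_def)
next
  case (Cons x w)
  obtain g e where x: "x = (g, e)" by force
  have "wsubst f (x # w) = (if e then winv (f g) else f g) @ wsubst f w" by (simp add: wsubst_def x)
  then show ?case using Cons by (simp add: cw_append x cw_winv)
qed

lemma wsubst_single [simp]: "wsubst f [(g, False)] = f g"
  by (simp add: wsubst_def)

lemma wsubst_pair: "wsubst f [(g, False), (h, False)] = f g @ f h"
  by (simp add: wsubst_def)

lemma inv_eig:
  fixes M :: cmat
  assumes "det M = 1" "M *v v = k *s v" "k \<noteq> 0"
  shows "matrix_inv M *v v = inverse k *s v"
proof -
  have "v = (matrix_inv M ** M) *v v" using assms by (simp add: minv_left)
  also have "\<dots> = k *s (matrix_inv M *v v)"
    by (simp add: matrix_vector_mul_assoc[symmetric] assms vector_scalar_commute)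
  finally have "inverse k *s v = inverse k *s (k *s (matrix_inv M *v v))" by simp
  then show ?thesis using assms(3) by (simp add: vector_smult_assoc)
qed

lemma eig_eval:
  assumes "SLa \<sigma>" "\<forall>g. \<sigma> g *v v = \<kappa> g *s v" "\<forall>g. \<kappa> g \<noteq> 0"
  shows "eval_word \<sigma> w *v v = cw \<kappa> w *s v"
proof (induction w)
  case Nil
  then show ?case by simp
next
  case (Cons x w)
  obtain g e where x: "x = (g, e)" by force
  have ig: "matrix_inv (\<sigma> g) *v v = inverse (\<kappa> g) *s v"
    using inv_eig assms by (simp add: SLa_def)
  show ?case using Cons assms ig
    by (simp add: x matrix_vector_mul_assoc[symmetric] vector_scalar_commute vector_smult_assoc mult.commute)
qed

lemma char_red:
  assumes "SLa \<sigma>" "v \<noteq> 0" "\<forall>g. \<sigma> g *v v = \<kappa> g *s v" "\<forall>g. \<kappa> g \<noteq> 0"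
  shows "character \<sigma> = (\<lambda>w. cw \<kappa> w + 1 / cw \<kappa> w)"
proof
  fix w
  show "character \<sigma> w = cw \<kappa> w + 1 / cw \<kappa> w"
    unfolding character_def
    using trace_eig[OF det_eval[OF assms(1)] assms(2) eig_eval[OF assms(1,3,4)]] .
qed

definition diag :: "('g \<Rightarrow> complex) \<Rightarrow> 'g \<Rightarrow> cmat" where
  "diag \<kappa> g = mk (\<kappa> g) 0 0 (1 / \<kappa> g)"

lemma SLa_diag: "\<forall>g. \<kappa> g \<noteq> 0 \<Longrightarrow> SLa (diag \<kappa>)"
  by (simp add: SLa_def diag_def det_c)

lemma eval_diag: "\<forall>g. \<kappa> g \<noteq> 0 \<Longrightarrow> eval_word (diag \<kappa>) w = mk (cw \<kappa> w) 0 0 (1 / cw \<kappa> w)"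
proof (induction w)
  case Nil
  then show ?case by (simp add: cmat_eq_iff)
next
  case (Cons x w)
  obtain g e where x: "x = (g, e)" by force
  have d: "det (diag \<kappa> g) = 1" using Cons.prems by (simp add: diag_def det_c)
  show ?case using Cons d
    by (simp add: x minv_SL2 cmat_eq_iff diag_def field_simps)
qed

lemma char_diag: "\<forall>g. \<kappa> g \<noteq> 0 \<Longrightarrow> character (diag \<kappa>) = (\<lambda>w. cw \<kappa> w + 1 / cw \<kappa> w)"
  by (simp add: character_def eval_diag trace_c fun_eq_iff)

lemma pm:
  fixes u t :: complex
  assumes "u \<noteq> 0" "t \<noteq> 0" "u + 1 / u = t + 1 / t"
  shows "u = t \<or> u = 1 / t"
proof -
  have "(u - t) * (u * t - 1) = 0" using assms by (simp add: field_simps)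
  then have "u - t = 0 \<or> u * t - 1 = 0" by (simp only: mult_eq_0_iff)
  then show ?thesis using assms by (auto simp: field_simps)
qed

lemma opt_alg:
  fixes a b a' b' :: complex
  assumes "a \<noteq> 0" "b \<noteq> 0" "a' = a \<or> a' = 1 / a" "b' = b \<or> b' = 1 / b"
    "a' * b' = a * b \<or> a' * b' = 1 / (a * b)"
  shows "(a' = a \<and> b' = b) \<or> (a' = 1 / a \<and> b' = 1 / b)"
proof -
  have sq: "\<And>z::complex. z * z = 1 \<Longrightarrow> 1 / z = z"
    by (metis div_by_1 mult_cancel_right2 mult_zero_left nonzero_eq_divide_eq zero_neq_one)
  show ?thesis
  proof (cases "a' = a")
    case True
    show ?thesis
    proof (cases "b' = b")
      case False
      then have b': "b' = 1 / b" using assms by auto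
      show ?thesis
      proof (cases "a' * b' = a * b")
        case True
        then have "b * b = 1" using \<open>a' = a\<close> b' assms(1,2) by (simp add: field_simps)
        then show ?thesis using sq \<open>a' = a\<close> b' by auto
      next
        case False
        then have "a' * b' = 1 / (a * b)" using assms by auto
        then have "a * a = 1" using \<open>a' = a\<close> b' assms(1,2) by (simp add: field_simps)
        then show ?thesis using sq \<open>a' = a\<close> b' by auto
      qed
    qed (simp add: True)
  next
    case False
    then have a': "a' = 1 / a" using assms by auto
    show ?thesis
    proof (cases "b' = b")
      case True
      show ?thesis
      proof (cases "a' * b' = a * b")
        case True
        then have "a * a = 1" using \<open>b' = b\<close> a' assms(1,2) by (simp add: field_simps)
        then show ?thesis using sq \<open>b' = b\<close> a' by auto
      next
        case False
        then have "a' * b' = 1 / (a * b)" using assms by auto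
        then have "b * b = 1" using \<open>b' = b\<close> a' assms(1,2) by (simp add: field_simps)
        then show ?thesis using sq \<open>b' = b\<close> a' by auto
      qed
    next
      case False
      then show ?thesis using a' assms by auto
    qed
  qed
qed

lemma all_gS: "(\<forall>g. P g) \<longleftrightarrow> P Ga \<and> P Gb"
  by (metis gS.exhaust)

lemma fixed_option:
  fixes \<kappa> :: "gS \<Rightarrow> complex"
  assumes nz: "\<forall>g. \<kappa> g \<noteq> 0"
    and fx: "\<And>w. cw \<kappa> (wsubst phi w) + 1 / cw \<kappa> (wsubst phi w) = cw \<kappa> w + 1 / cw \<kappa> w"
  shows "(\<forall>g. cw \<kappa> (phi g) = \<kappa> g) \<or> (\<forall>g. cw \<kappa> (phi g) = 1 / \<kappa> g)"
proof -
  have s: "cw \<kappa> (phi g) = \<kappa> g \<or> cw \<kappa> (phi g) = 1 / \<kappa> g" for g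
    using pm[OF cw_nz[OF nz] nz[rule_format, of g]] fx[of "[(g, False)]"] by simp
  have p: "cw \<kappa> (phi Ga) * cw \<kappa> (phi Gb) = \<kappa> Ga * \<kappa> Gb \<or> cw \<kappa> (phi Ga) * cw \<kappa> (phi Gb) = 1 / (\<kappa> Ga * \<kappa> Gb)"
    using pm[of "cw \<kappa> (phi Ga) * cw \<kappa> (phi Gb)" "\<kappa> Ga * \<kappa> Gb"] fx[of "[(Ga, False), (Gb, False)]"]
      nz cw_nz[OF nz] by (simp add: wsubst_pair cw_append)
  show ?thesis using opt_alg[OF nz[rule_format, of Ga] nz[rule_format, of Gb] s s p]
    by (simp add: all_gS)
qed


lemma repS_SLa: "repS \<sigma> \<longleftrightarrow> SLa \<sigma>"
  by (simp add: repS_def SL2_def SLa_def)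

lemma eval_map_Fib: "eval_word \<rho> (map (\<lambda>(g, e). (Fib g, e)) w) = eval_word (\<lambda>g. \<rho> (Fib g)) w"
  apply (induction w)
   apply simp
  subgoal for x w by (cases x) auto
  done

lemma restr_char: "restr (character \<rho>) = character (\<lambda>g. \<rho> (Fib g))"
  by (simp add: restr_def character_def eval_map_Fib fun_eq_iff)

lemma partA:
  assumes "repM phi \<rho>"
  shows "restr (character \<rho>) \<in> X_phi phi"
proof -
  define \<tau> where "\<tau> = (\<lambda>g. \<rho> (Fib g))"
  define T where "T = \<rho> Gt"
  have sl: "SLa \<tau>" using assms by (simp add: repM_def SL2_def SLa_def \<tau>_def)
  have dT: "det T = 1" using assms by (simp add: repM_def SL2_def T_def)
  have rel: "(\<lambda>g. eval_word \<tau> (phi g)) = (\<lambda>g. matrix_inv T ** \<tau> g ** T)"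
    using assms by (simp add: repM_def \<tau>_def T_def fun_eq_iff)
  have "phi_act phi (character \<tau>) = character \<tau>"
  proof
    fix w
    have "phi_act phi (character \<tau>) w = trace (eval_word (\<lambda>g. eval_word \<tau> (phi g)) w)"
      by (simp add: phi_act_def character_def eval_wsubst[OF sl])
    also have "\<dots> = trace (matrix_inv T ** eval_word \<tau> w ** T)"
      by (simp add: rel eval_conj[OF sl dT])
    also have "\<dots> = character \<tau> w" by (simp add: trace_conj[OF dT] character_def)
    finally show "phi_act phi (character \<tau>) w = character \<tau> w" .
  qed
  moreover have "character \<tau> \<in> XS" using sl by (auto simp: XS_def repS_SLa)
  ultimately show ?thesis by (simp add: X_phi_def restr_char \<tau>_def[symmetric])
qed

lemma extend:
  assumes "SLa \<tau>" "character \<tau> = character \<sigma>" "det T = 1"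
    "\<forall>g. matrix_inv T ** \<tau> g ** T = eval_word \<tau> (phi g)"
  shows "character \<sigma> \<in> restr ` XM phi"
proof -
  define \<rho> where "\<rho> = (\<lambda>x. case x of Gt \<Rightarrow> T | Fib g \<Rightarrow> \<tau> g)"
  have r: "(\<lambda>g. \<rho> (Fib g)) = \<tau>" by (simp add: \<rho>_def)
  have "repM phi \<rho>"
    unfolding repM_def
  proof (intro conjI allI)
    fix x show "\<rho> x \<in> SL2" using assms by (cases x) (auto simp: \<rho>_def SL2_def SLa_def)
  next
    fix g show "matrix_inv (\<rho> Gt) ** \<rho> (Fib g) ** \<rho> Gt = eval_word (\<lambda>x. \<rho> (Fib x)) (phi g)"
      using assms(4) by (simp add: r) (simp add: \<rho>_def)
  qed
  then have "character \<rho> \<in> XM phi" by (auto simp: XM_def)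
  moreover have "restr (character \<rho>) = character \<sigma>" using assms(2) by (simp add: restr_char r)
  ultimately show ?thesis by (metis image_eqI)
qed

lemma ev_single [simp]: "eval_word \<sigma> [(g, False)] = \<sigma> g"
  by simp

lemma partB:
  assumes aut: "is_free_aut phi" and sl: "SLa \<sigma>" and fx: "phi_act phi (character \<sigma>) = character \<sigma>"
  shows "character \<sigma> \<in> restr ` XM phi"
proof -
  have fxw: "character \<sigma> (wsubst phi w) = character \<sigma> w" for w
    using fun_cong[OF fx, of w] by (simp add: phi_act_def)
  show ?thesis
  proof (cases "common_eig (\<sigma> Ga) (\<sigma> Gb)")
    case True
    then obtain v a b where v: "v \<noteq> 0" "\<sigma> Ga *v v = a *s v" "\<sigma> Gb *v v = b *s v"
      unfolding common_eig_def by blast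
    define \<kappa> where "\<kappa> = (\<lambda>g. case g of Ga \<Rightarrow> a | Gb \<Rightarrow> b)"
    have ev: "\<forall>g. \<sigma> g *v v = \<kappa> g *s v" using v by (simp add: all_gS \<kappa>_def)
    have nz: "\<forall>g. \<kappa> g \<noteq> 0" using ev eig_nz sl v(1) by (metis SLa_def)
    have ch: "character \<sigma> = (\<lambda>w. cw \<kappa> w + 1 / cw \<kappa> w)" by (rule char_red[OF sl v(1) ev nz])
    have opt: "(\<forall>g. cw \<kappa> (phi g) = \<kappa> g) \<or> (\<forall>g. cw \<kappa> (phi g) = 1 / \<kappa> g)"
      by (rule fixed_option[OF nz]) (metis fxw ch)
    have sld: "SLa (diag \<kappa>)" by (rule SLa_diag[OF nz])
    have chd: "character (diag \<kappa>) = character \<sigma>" using ch char_diag[OF nz] by simp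
    have evd: "eval_word (diag \<kappa>) (phi g) = mk (cw \<kappa> (phi g)) 0 0 (1 / cw \<kappa> (phi g))" for g
      by (rule eval_diag[OF nz])
    show ?thesis
    proof (cases "\<forall>g. cw \<kappa> (phi g) = \<kappa> g")
      case True
      have i1: "matrix_inv (mat 1 :: cmat) = mat 1" by (rule minv_unique) simp_all
      show ?thesis
        apply (rule extend[OF sld chd, of "mat 1"])
         apply (simp add: det_I)
        using True by (simp add: i1 evd diag_def)
    next
      case False
      then have o2: "\<forall>g. cw \<kappa> (phi g) = 1 / \<kappa> g" using opt by blast
      define T where "T = mk 0 1 (-1) 0"
      have dT: "det T = 1" by (simp add: T_def det_c)
      have iT: "matrix_inv T = mk 0 (-1) 1 0" using minv_SL2[OF dT] by (simp add: T_def)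
      show ?thesis
        apply (rule extend[OF sld chd dT])
        using o2 nz unfolding iT by (simp add: evd diag_def cmat_eq_iff T_def)
    qed
  next
    case False
    define \<sigma>' where "\<sigma>' = (\<lambda>g. eval_word \<sigma> (phi g))"
    have sl': "SLa \<sigma>'" unfolding \<sigma>'_def by (rule SLa_subst[OF sl])
    have ew: "eval_word \<sigma> (wsubst phi w) = eval_word \<sigma>' w" for w
      unfolding \<sigma>'_def by (rule eval_wsubst[OF sl])
    have ch': "character \<sigma>' = character \<sigma>"
      using fxw ew by (simp add: character_def fun_eq_iff)
    obtain h where h: "\<forall>g. freduce (wsubst phi (h g)) = [(g, False)]"
      using aut unfolding is_free_aut_def by blast
    have bk: "\<sigma> g = eval_word \<sigma>' (h g)" for g
    proof -
      have "\<sigma> g = eval_word \<sigma> (freduce (wsubst phi (h g)))" using h by simp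
      also have "\<dots> = eval_word \<sigma>' (h g)" by (simp add: eval_freduce[OF sl] ew)
      finally show ?thesis .
    qed
    have ne': "\<not> common_eig (\<sigma>' Ga) (\<sigma>' Gb)"
    proof
      assume "common_eig (\<sigma>' Ga) (\<sigma>' Gb)"
      then obtain v a b where v: "v \<noteq> 0" "\<sigma>' Ga *v v = a *s v" "\<sigma>' Gb *v v = b *s v"
        unfolding common_eig_def by blast
      define \<kappa> where "\<kappa> = (\<lambda>g. case g of Ga \<Rightarrow> a | Gb \<Rightarrow> b)"
      have ev: "\<forall>g. \<sigma>' g *v v = \<kappa> g *s v" using v by (simp add: all_gS \<kappa>_def)
      have nz: "\<forall>g. \<kappa> g \<noteq> 0" using ev eig_nz sl' v(1) by (metis SLa_def)
      have "\<sigma> g *v v = cw \<kappa> (h g) *s v" for g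
        using bk eig_eval[OF sl' ev nz] by metis
      then have "common_eig (\<sigma> Ga) (\<sigma> Gb)" unfolding common_eig_def using v(1) by blast
      then show False using False by simp
    qed
    have t1: "trace (\<sigma> Ga) = trace (\<sigma>' Ga)"
      using fun_cong[OF ch', of "[(Ga, False)]"] by (simp add: character_def)
    have t2: "trace (\<sigma> Gb) = trace (\<sigma>' Gb)"
      using fun_cong[OF ch', of "[(Gb, False)]"] by (simp add: character_def)
    have t3: "trace (\<sigma> Ga ** \<sigma> Gb) = trace (\<sigma>' Ga ** \<sigma>' Gb)"
      using fun_cong[OF ch', of "[(Ga, False), (Gb, False)]"] by (simp add: character_def)
    obtain T where T: "det T = 1" "matrix_inv T ** \<sigma> Ga ** T = \<sigma>' Ga" "matrix_inv T ** \<sigma> Gb ** T = \<sigma>' Gb"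
      using conj_exists[OF _ _ _ _ t1 t2 t3 False ne'] sl sl' by (auto simp: SLa_def)
    show ?thesis
      apply (rule extend[OF sl refl T(1)])
      using T by (simp add: all_gS \<sigma>'_def)
  qed
qed


lemma esum_Cons [simp]: "esum h ((g, e) # w) = (if g = h then (if e then -1 else 1) else 0) + esum h w"
  by (simp add: esum_def)

lemma pim: "(z::complex) \<noteq> 0 \<Longrightarrow> z * z powi (n - 1) = z powi n"
  by (metis power_int_minus_mult mult.commute)

lemma cw_powi:
  fixes \<kappa> :: "gS \<Rightarrow> complex"
  assumes nz: "\<forall>g. \<kappa> g \<noteq> 0"
  shows "cw \<kappa> w = \<kappa> Ga powi esum Ga w * \<kappa> Gb powi esum Gb w"
proof (induction w)
  case Nil
  then show ?case by (simp add: esum_def)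
next
  case (Cons x w)
  obtain g e where x: "x = (g, e)" by force
  have a: "\<kappa> Ga \<noteq> 0" and b: "\<kappa> Gb \<noteq> 0" using nz by auto
  show ?case using Cons a b
    by (cases g; cases e) (simp_all add: x power_int_add power_int_minus field_simps pim)
qed

lemma powi_elim:
  fixes x y :: complex
  assumes x: "x \<noteq> 0" and y: "y \<noteq> 0"
    and h1: "x powi p * y powi q = 1" and h2: "x powi r * y powi s = 1"
  shows "x powi (p * s - q * r) = 1 \<and> y powi (p * s - q * r) = 1"
proof -
  have e1: "x powi (p * s) * y powi (q * s) = 1"
    using arg_cong[OF h1, of "\<lambda>z. z powi s"] by (simp add: power_int_mult_distrib power_int_mult)
  have e2': "x powi (r * q) * y powi (s * q) = 1"
    using arg_cong[OF h2, of "\<lambda>z. z powi q"] by (simp add: power_int_mult_distrib power_int_mult)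
  then have e2: "x powi (q * r) * y powi (q * s) = 1" by (simp add: mult.commute)
  have e3: "x powi (p * r) * y powi (q * r) = 1"
    using arg_cong[OF h1, of "\<lambda>z. z powi r"] by (simp add: power_int_mult_distrib power_int_mult)
  have e4': "x powi (r * p) * y powi (s * p) = 1"
    using arg_cong[OF h2, of "\<lambda>z. z powi p"] by (simp add: power_int_mult_distrib power_int_mult)
  then have e4: "x powi (p * r) * y powi (p * s) = 1" by (simp add: mult.commute)
  have "x powi (p * s - q * r) = x powi (p * s) / x powi (q * r)"
    using x by (simp add: power_int_diff)
  also have "\<dots> = 1" using e1 e2 x y
    by (metis divide_self mult_cancel_right2 mult.commute power_int_eq_0_iff mult_left_cancel)
  finally have c1: "x powi (p * s - q * r) = 1" .
  have "y powi (p * s - q * r) = y powi (p * s) / y powi (q * r)"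
    using y by (simp add: power_int_diff)
  also have "\<dots> = 1" using e3 e4 x y
    by (metis divide_self mult_cancel_right2 mult.commute power_int_eq_0_iff mult_left_cancel)
  finally show ?thesis using c1 by simp
qed

lemma powi_pow:
  fixes x :: complex
  assumes "x \<noteq> 0" "x powi N = 1"
  shows "x ^ nat \<bar>N\<bar> = 1"
proof (cases "N \<ge> 0")
  case True
  then show ?thesis using assms by (simp add: power_int_nonneg_exp)
next
  case False
  then have "x powi N = inverse (x powi (- N))" by (simp add: power_int_minus[symmetric])
  also have "x powi (- N) = x ^ nat (- N)" using False by (simp add: power_int_nonneg_exp)
  finally have "inverse (x ^ nat (- N)) = 1" using assms by simp
  then have "x ^ nat (- N) = 1" by (simp add: inverse_eq_1_iff)
  then show ?thesis using False by simp
qed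

definition kf :: "complex \<times> complex \<Rightarrow> gS \<Rightarrow> complex" where
  "kf p = (\<lambda>g. case g of Ga \<Rightarrow> fst p | Gb \<Rightarrow> snd p)"

lemma partC:
  assumes dt: "hom_det phi = 1" and tr: "\<bar>hom_trace phi\<bar> > 2"
  shows "finite {ch \<in> X_phi phi. \<exists>\<sigma>. repS \<sigma> \<and> reducible \<sigma> \<and> ch = character \<sigma>}"
proof -
  define t where "t = hom_trace phi"
  define n1 where "n1 = nat \<bar>2 - t\<bar>"
  define n2 where "n2 = nat \<bar>2 + t\<bar>"
  have n1: "n1 \<ge> 1" and n2: "n2 \<ge> 1" using tr unfolding n1_def n2_def t_def by auto
  define R where "R = {z::complex. z ^ n1 = 1} \<union> {z. z ^ n2 = 1}"
  have fR: "finite R" unfolding R_def using finite_roots_unity n1 n2 by auto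
  define Fm where "Fm = (\<lambda>p. (\<lambda>w. cw (kf p) w + 1 / cw (kf p) w))"
  define A11 where "A11 = hom_matrix phi Ga Ga"
  define A12 where "A12 = hom_matrix phi Ga Gb"
  define A21 where "A21 = hom_matrix phi Gb Ga"
  define A22 where "A22 = hom_matrix phi Gb Gb"
  have dt': "A11 * A22 - A12 * A21 = 1" using dt by (simp add: hom_det_def A11_def A12_def A21_def A22_def)
  have tr': "A11 + A22 = t" by (simp add: t_def hom_trace_def A11_def A22_def)
  have sub: "{ch \<in> X_phi phi. \<exists>\<sigma>. repS \<sigma> \<and> reducible \<sigma> \<and> ch = character \<sigma>} \<subseteq> Fm ` (R \<times> R)"
  proof
    fix ch assume "ch \<in> {ch \<in> X_phi phi. \<exists>\<sigma>. repS \<sigma> \<and> reducible \<sigma> \<and> ch = character \<sigma>}"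
    then obtain \<sigma> where chX: "ch \<in> X_phi phi" and rs: "repS \<sigma>" and rd: "reducible \<sigma>"
      and chs: "ch = character \<sigma>" by blast
    have sl: "SLa \<sigma>" using rs by (simp add: repS_SLa)
    obtain v where v: "v \<noteq> 0" "\<forall>w. \<exists>c. eval_word \<sigma> w *v v = c *s v"
      using rd unfolding reducible_def by blast
    obtain a where a: "\<sigma> Ga *v v = a *s v" using v(2)[rule_format, of "[(Ga, False)]"] by auto
    obtain b where b: "\<sigma> Gb *v v = b *s v" using v(2)[rule_format, of "[(Gb, False)]"] by auto
    define \<kappa> where "\<kappa> = kf (a, b)"
    have ev: "\<forall>g. \<sigma> g *v v = \<kappa> g *s v" using a b by (simp add: all_gS \<kappa>_def kf_def)
    have nz: "\<forall>g. \<kappa> g \<noteq> 0" using ev eig_nz sl v(1) by (metis SLa_def)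
    have a0: "a \<noteq> 0" and b0: "b \<noteq> 0" using nz by (auto simp: \<kappa>_def kf_def all_gS)
    have ch: "character \<sigma> = (\<lambda>w. cw \<kappa> w + 1 / cw \<kappa> w)" by (rule char_red[OF sl v(1) ev nz])
    have fx: "phi_act phi ch = ch" using chX by (simp add: X_phi_def)
    have fxw: "cw \<kappa> (wsubst phi w) + 1 / cw \<kappa> (wsubst phi w) = cw \<kappa> w + 1 / cw \<kappa> w" for w
      using fun_cong[OF fx, of w] by (simp add: phi_act_def chs ch)
    have opt: "(\<forall>g. cw \<kappa> (phi g) = \<kappa> g) \<or> (\<forall>g. cw \<kappa> (phi g) = 1 / \<kappa> g)"
      by (rule fixed_option[OF nz fxw])
    have pa: "cw \<kappa> (phi Ga) = a powi A11 * b powi A21"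
      by (subst cw_powi[OF nz]) (simp add: \<kappa>_def kf_def A11_def A21_def hom_matrix_def)
    have pb: "cw \<kappa> (phi Gb) = a powi A12 * b powi A22"
      by (subst cw_powi[OF nz]) (simp add: \<kappa>_def kf_def A12_def A22_def hom_matrix_def)
    have ka: "\<kappa> Ga = a" "\<kappa> Gb = b" by (simp_all add: \<kappa>_def kf_def)
    have ab: "a \<in> R \<and> b \<in> R"
    proof (cases "\<forall>g. cw \<kappa> (phi g) = \<kappa> g")
      case True
      then have e1: "a powi A11 * b powi A21 = a" and e2: "a powi A12 * b powi A22 = b"
        using pa pb ka by (metis)+
      have f1: "a powi (A11 - 1) * b powi A21 = 1"
        using e1 a0 b0 by (simp add: power_int_diff field_simps)
      have f2: "a powi A12 * b powi (A22 - 1) = 1"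
        using e2 a0 b0 by (simp add: power_int_diff field_simps)
      have N: "(A11 - 1) * (A22 - 1) - A21 * A12 = 2 - t" using dt' tr' by (simp add: algebra_simps)
      have "a powi (2 - t) = 1 \<and> b powi (2 - t) = 1"
        using powi_elim[OF a0 b0 f1 f2] N by simp
      then show ?thesis using powi_pow a0 b0 unfolding R_def n1_def by blast
    next
      case False
      then have "\<forall>g. cw \<kappa> (phi g) = 1 / \<kappa> g" using opt by blast
      then have e1: "a powi A11 * b powi A21 = 1 / a" and e2: "a powi A12 * b powi A22 = 1 / b"
        using pa pb ka by (metis)+
      have f1: "a powi (A11 + 1) * b powi A21 = 1"
        using e1 a0 b0 by (simp add: power_int_add field_simps)
      have f2: "a powi A12 * b powi (A22 + 1) = 1"
        using e2 a0 b0 by (simp add: power_int_add field_simps)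
      have N: "(A11 + 1) * (A22 + 1) - A21 * A12 = 2 + t" using dt' tr' by (simp add: algebra_simps)
      have "a powi (2 + t) = 1 \<and> b powi (2 + t) = 1"
        using powi_elim[OF a0 b0 f1 f2] N by simp
      then show ?thesis using powi_pow a0 b0 unfolding R_def n2_def by blast
    qed
    have "ch = Fm (a, b)" using chs ch by (simp add: Fm_def \<kappa>_def)
    then show "ch \<in> Fm ` (R \<times> R)" using ab by blast
  qed
  show ?thesis by (rule finite_subset[OF sub]) (simp add: fR)
qed


theorem lemma3p1:
  fixes phi :: "gS \<Rightarrow> gS word"
  assumes "is_free_aut phi"
    and "hom_det phi = 1"
    and "\<bar>hom_trace phi\<bar> > 2"
  shows "restr ` XM phi = X_phi phi \<and>
         finite {ch \<in> X_phi phi. \<exists>\<sigma>. repS \<sigma> \<and> reducible \<sigma> \<and> ch = character \<sigma>}"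
proof
  show "restr ` XM phi = X_phi phi"
  proof
    show "restr ` XM phi \<subseteq> X_phi phi"
      using partA by (auto simp: XM_def)
  next
    show "X_phi phi \<subseteq> restr ` XM phi"
    proof
      fix ch assume ch: "ch \<in> X_phi phi"
      then obtain \<sigma> where s: "repS \<sigma>" "ch = character \<sigma>" by (auto simp: X_phi_def XS_def)
      have "phi_act phi (character \<sigma>) = character \<sigma>" using ch s by (simp add: X_phi_def)
      then show "ch \<in> restr ` XM phi" using partB[OF assms(1)] s by (simp add: repS_SLa)
    qed
  qed
next
  show "finite {ch \<in> X_phi phi. \<exists>\<sigma>. repS \<sigma> \<and> reducible \<sigma> \<and> ch = character \<sigma>}"
    by (rule partC[OF assms(2,3)])
qed

end
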